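(* Under the assumptions in the context, $M_J(\mathbf d_A)=\Theta(M(\mathbf d_A))$, and with probability $1-o(1)$, $M_J(\mathbf d_A)-M_J(\mathbf d_S)=o(M(\mathbf d_A))$.
   Context: All asymptotics are as $n\to\infty$. For each $n$, $\mathbf d=(d(1),\dots,d(n))$ is a sequence of integers with $1\le d(1)\le\dots\le d(n)$ and even sum; $M=\sum_i d(i)$, $\Delta=d(n)$. Let $p=p(n)\in(0,1)$ with $p<1-\varepsilon$ for a constant $\varepsilon>0$ and $\Delta^2p^{-12}\log^{12}M\le\delta pM$ for a function $\delta=\delta(n)\to0$ with $\delta^{-1}=O(\log\log M)$. $G$ is a uniformly random simple graph on $[n]$ with degree sequence $\mathbf d$, $S\subseteq[n]$ contains each vertex independently with probability $p$, and $\mathbf d_S$ is the degree sequence of $G[S]$. For a sequence $\mathbf x$, $M(\mathbf x)$ is the sum of its entries, $M_J(\mathbf x)$ the sum of its entries not equal to $2$, $n_k(\mathbf x)$ the number of entries equal to $k$. Definition of $\mathbf d_A$: with $X_j\sim\mathrm{Bin}(j,p)$, $\tilde N(k)=\lfloor p\sum_{i\in[n]}\Pr(X_{d(i)}\le k)+\tfrac12\rfloor$ for $k\ge0$, $\tilde N(-1)=0$; $\mathbf d_A$ is the non-decreasing sequence with $n_k(\mathbf d_A)=\tilde N(k)-\tilde N(k-1)$. *)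

theory Defs
  imports "HOL-Probability.Probability" "HOL-Library.Landau_Symbols"
begin

text \<open>Vertices are 0..<n (the paper's [n] shifted by one); a degree sequence is a
function d :: nat => nat, vertex i having degree d i.  A simple graph on 0..<n is a
set of 2-element subsets of 0..<n.\<close>

definition simple_graphs_deg :: "nat \<Rightarrow> (nat \<Rightarrow> nat) \<Rightarrow> nat set set set" where
  "simple_graphs_deg n d =
     {E. E \<subseteq> {e. \<exists>i j. i < n \<and> j < n \<and> i \<noteq> j \<and> e = {i, j}}
         \<and> (\<forall>i<n. card {e\<in>E. i \<in> e} = d i)}"

definition seqM :: "nat list \<Rightarrow> nat" where
  "seqM x = sum_list x"

definition seqMJ :: "nat list \<Rightarrow> nat" where
  "seqMJ x = sum_list (filter (\<lambda>a. a \<noteq> 2) x)"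

definition seqn :: "nat \<Rightarrow> nat list \<Rightarrow> nat" where
  "seqn k x = count_list x k"

definition induced_degseq :: "nat set set \<Rightarrow> nat set \<Rightarrow> nat list" where
  "induced_degseq E S =
     sort (map (\<lambda>v. card {e\<in>E. v \<in> e \<and> e \<subseteq> S}) (sorted_list_of_set S))"

definition Ntil :: "nat \<Rightarrow> (nat \<Rightarrow> nat) \<Rightarrow> real \<Rightarrow> nat \<Rightarrow> int" where
  "Ntil n d p k =
     \<lfloor>p * (\<Sum>i<n. measure_pmf.prob (binomial_pmf (d i) p) {..k}) + 1/2\<rfloor>"

definition nA :: "nat \<Rightarrow> (nat \<Rightarrow> nat) \<Rightarrow> real \<Rightarrow> nat \<Rightarrow> nat" where
  "nA n d p k = nat (if k = 0 then Ntil n d p 0 else Ntil n d p k - Ntil n d p (k - 1))"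

text \<open>d_A: the non-decreasing sequence with n_k(d_A) copies of k.  Entries beyond the
maximum degree do not occur, since tilde N is constant from there on.\<close>
definition dA :: "nat \<Rightarrow> (nat \<Rightarrow> nat) \<Rightarrow> real \<Rightarrow> nat list" where
  "dA n d p = concat (map (\<lambda>k. replicate (nA n d p k) k)
                         [0..<Suc (Max (insert 0 (d ` {..<n})))])"

definition random_subset :: "nat \<Rightarrow> real \<Rightarrow> nat set pmf" where
  "random_subset n p =
     map_pmf (\<lambda>f. {i\<in>{..<n}. f i}) (Pi_pmf {..<n} False (\<lambda>_. bernoulli_pmf p))"

definition graph_subset_pmf :: "nat \<Rightarrow> (nat \<Rightarrow> nat) \<Rightarrow> real \<Rightarrow> (nat set set \<times> nat set) pmf" where
  "graph_subset_pmf n d p = pair_pmf (pmf_of_set (simple_graphs_deg n d)) (random_subset n p)"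

end

theory Submission
  imports Defs
begin


definition ex :: "'a pmf \<Rightarrow> ('a \<Rightarrow> real) \<Rightarrow> real" where
  "ex M X = (\<Sum>x\<in>set_pmf M. pmf M x * X x)"

lemma ex_expectation:
  assumes "finite (set_pmf M)"
  shows "ex M X = measure_pmf.expectation M X"
  unfolding ex_def using assms
  by (subst integral_measure_pmf_real[of "set_pmf M"]) (auto simp: mult.commute)

lemma ex_const: "finite (set_pmf M) \<Longrightarrow> ex M (\<lambda>_. c) = c"
  unfolding ex_def by (simp add: sum_distrib_right[symmetric] sum_pmf_eq_1)

lemma ex_add: "ex M (\<lambda>x. X x + Y x) = ex M X + ex M Y"
  unfolding ex_def by (simp add: distrib_left sum.distrib)

lemma ex_diff: "ex M (\<lambda>x. X x - Y x) = ex M X - ex M Y"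
  unfolding ex_def by (simp add: right_diff_distrib sum_subtractf)

lemma ex_cmult: "ex M (\<lambda>x. c * X x) = c * ex M X"
  unfolding ex_def by (simp add: sum_distrib_left algebra_simps)

lemma ex_sum: "ex M (\<lambda>x. \<Sum>j\<in>J. X j x) = (\<Sum>j\<in>J. ex M (X j))"
  unfolding ex_def by (simp add: sum_distrib_left sum.swap[of _ J])

lemma ex_cong: "(\<And>x. x \<in> set_pmf M \<Longrightarrow> X x = Y x) \<Longrightarrow> ex M X = ex M Y"
  unfolding ex_def by (auto intro!: sum.cong)

lemma ex_mono: "(\<And>x. x \<in> set_pmf M \<Longrightarrow> X x \<le> Y x) \<Longrightarrow> ex M X \<le> ex M Y"
  unfolding ex_def by (auto intro!: sum_mono mult_left_mono)

lemma ex_nonneg: "(\<And>x. x \<in> set_pmf M \<Longrightarrow> 0 \<le> X x) \<Longrightarrow> 0 \<le> ex M X"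
  unfolding ex_def by (auto intro!: sum_nonneg)

lemma ex_map:
  assumes "finite (set_pmf M)"
  shows "ex (map_pmf h M) X = ex M (\<lambda>x. X (h x))"
  using assms by (simp add: ex_expectation integral_map_pmf)

lemma ex_pair:
  "ex (pair_pmf A B) (\<lambda>z. X (fst z) * Y (snd z)) = ex A X * ex B Y"
  unfolding ex_def set_pair_pmf sum_product sum.cartesian_product
  by (intro sum.cong) (auto simp: pmf_pair)

lemma prob_ex:
  assumes "finite (set_pmf M)"
  shows "measure_pmf.prob M {x. P x} = ex M (\<lambda>x. of_bool (P x))"
proof -
  have "measure_pmf.prob M {x. P x} = measure_pmf.prob M ({x. P x} \<inter> set_pmf M)"
    by (simp add: measure_Int_set_pmf)
  also have "\<dots> = sum (pmf M) ({x. P x} \<inter> set_pmf M)"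
    using assms by (intro measure_measure_pmf_finite) auto
  also have "\<dots> = (\<Sum>x\<in>set_pmf M. if x \<in> {x. P x} then pmf M x else 0)"
    using assms by (subst Int_commute, subst sum.inter_restrict) auto
  also have "\<dots> = ex M (\<lambda>x. of_bool (P x))"
    unfolding ex_def by (intro sum.cong) auto
  finally show ?thesis .
qed

lemma cheb:
  assumes "finite (set_pmf M)" "t > 0"
  shows "measure_pmf.prob M {x. t < \<bar>F x - c\<bar>} \<le> ex M (\<lambda>x. (F x - c)\<^sup>2) / t\<^sup>2"
proof -
  have "measure_pmf.prob M {x. t < \<bar>F x - c\<bar>} = ex M (\<lambda>x. of_bool (t < \<bar>F x - c\<bar>))"
    using assms(1) by (rule prob_ex)
  also have "\<dots> \<le> ex M (\<lambda>x. (F x - c)\<^sup>2 / t\<^sup>2)"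
  proof (rule ex_mono)
    fix x
    show "of_bool (t < \<bar>F x - c\<bar>) \<le> (F x - c)\<^sup>2 / t\<^sup>2"
    proof (cases "t < \<bar>F x - c\<bar>")
      case True
      then have "t\<^sup>2 \<le> \<bar>F x - c\<bar>\<^sup>2" using assms(2) by (intro power_mono) auto
      then show ?thesis using True assms(2) by (simp add: power2_abs)
    qed auto
  qed
  also have "\<dots> = ex M (\<lambda>x. (F x - c)\<^sup>2) / t\<^sup>2"
    using ex_cmult[of M "1/t\<^sup>2" "\<lambda>x. (F x - c)\<^sup>2"] by (simp add: field_simps)
  finally show ?thesis .
qed

lemma var_bound:
  fixes X :: "'j \<Rightarrow> 'a \<Rightarrow> real"
  assumes fin: "finite (set_pmf M)" "finite J"
  assumes nonneg: "\<And>j x. j \<in> J \<Longrightarrow> 0 \<le> X j x"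
  assumes indep: "\<And>j k. j \<in> J \<Longrightarrow> k \<in> J \<Longrightarrow> \<not> Dep j k \<Longrightarrow>
                      ex M (\<lambda>x. X j x * X k x) = ex M (X j) * ex M (X k)"
  shows "ex M (\<lambda>x. ((\<Sum>j\<in>J. X j x) - (\<Sum>j\<in>J. ex M (X j)))\<^sup>2)
           \<le> (\<Sum>j\<in>J. \<Sum>k\<in>{k\<in>J. Dep j k}. ex M (\<lambda>x. X j x * X k x))"
proof -
  define mu where "mu = (\<Sum>j\<in>J. ex M (X j))"
  have "ex M (\<lambda>x. ((\<Sum>j\<in>J. X j x) - mu)\<^sup>2)
       = ex M (\<lambda>x. (\<Sum>j\<in>J. X j x)\<^sup>2 - 2 * mu * (\<Sum>j\<in>J. X j x) + mu\<^sup>2)"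
    by (simp add: power2_eq_square algebra_simps)
  also have "\<dots> = ex M (\<lambda>x. (\<Sum>j\<in>J. X j x)\<^sup>2) - 2 * mu * mu + mu\<^sup>2"
    by (simp add: ex_add ex_diff ex_cmult ex_const fin ex_sum mu_def)
  also have "\<dots> = ex M (\<lambda>x. (\<Sum>j\<in>J. X j x)\<^sup>2) - mu\<^sup>2"
    by (simp add: power2_eq_square)
  also have "ex M (\<lambda>x. (\<Sum>j\<in>J. X j x)\<^sup>2) = (\<Sum>j\<in>J. \<Sum>k\<in>J. ex M (\<lambda>x. X j x * X k x))"
    by (simp add: power2_eq_square sum_product ex_sum)
  also have "mu\<^sup>2 = (\<Sum>j\<in>J. \<Sum>k\<in>J. ex M (X j) * ex M (X k))"
    by (simp add: mu_def power2_eq_square sum_product)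
  also have "(\<Sum>j\<in>J. \<Sum>k\<in>J. ex M (\<lambda>x. X j x * X k x)) - (\<Sum>j\<in>J. \<Sum>k\<in>J. ex M (X j) * ex M (X k))
        = (\<Sum>j\<in>J. \<Sum>k\<in>J. ex M (\<lambda>x. X j x * X k x) - ex M (X j) * ex M (X k))"
    by (simp add: sum_subtractf)
  also have "\<dots> \<le> (\<Sum>j\<in>J. \<Sum>k\<in>J. if Dep j k then ex M (\<lambda>x. X j x * X k x) else 0)"
  proof (intro sum_mono)
    fix j k assume jk: "j \<in> J" "k \<in> J"
    have "0 \<le> ex M (X j) * ex M (X k)"
      using jk nonneg by (intro mult_nonneg_nonneg ex_nonneg) auto
    then show "ex M (\<lambda>x. X j x * X k x) - ex M (X j) * ex M (X k)
          \<le> (if Dep j k then ex M (\<lambda>x. X j x * X k x) else 0)"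
      using indep[OF jk] by auto
  qed
  also have "\<dots> = (\<Sum>j\<in>J. \<Sum>k\<in>{k\<in>J. Dep j k}. ex M (\<lambda>x. X j x * X k x))"
    using fin by (simp add: sum.inter_filter)
  finally show ?thesis unfolding mu_def .
qed


lemma finite_set_Pi_bool:
  fixes P :: "'a \<Rightarrow> bool pmf"
  assumes "finite I"
  shows "finite (set_pmf (Pi_pmf I dflt P))"
  using assms by (simp add: set_Pi_pmf finite_PiE_dflt)

lemma ex_indep:
  fixes X Y :: "('a \<Rightarrow> bool) \<Rightarrow> real" and P :: "'a \<Rightarrow> bool pmf"
  assumes fin: "finite I" and AB: "A \<subseteq> I" "B \<subseteq> I" "A \<inter> B = {}"
    and X: "\<And>f g. (\<And>i. i \<in> A \<Longrightarrow> f i = g i) \<Longrightarrow> X f = X g"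
    and Y: "\<And>f g. (\<And>i. i \<in> B \<Longrightarrow> f i = g i) \<Longrightarrow> Y f = Y g"
  shows "ex (Pi_pmf I dflt P) (\<lambda>f. X f * Y f)
           = ex (Pi_pmf I dflt P) X * ex (Pi_pmf I dflt P) Y"
proof -
  define h :: "('a \<Rightarrow> bool) \<times> ('a \<Rightarrow> bool) \<Rightarrow> 'a \<Rightarrow> bool"
    where "h = (\<lambda>(f,g) x. if x \<in> A then f x else g x)"
  define R where "R = pair_pmf (Pi_pmf A dflt P) (Pi_pmf (I - A) dflt P)"
  have fA: "finite A" using fin AB finite_subset by blast
  have U: "A \<union> (I - A) = I" using AB by auto
  have eq: "Pi_pmf I dflt P = map_pmf h R"
    using Pi_pmf_union[of A "I - A" dflt P] fA fin unfolding U h_def R_def by auto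
  have finR: "finite (set_pmf R)"
    unfolding R_def using fA fin by (simp add: finite_set_Pi_bool)
  have gen: "ex (Pi_pmf I dflt P) Z = ex R (\<lambda>z. Z (h z))" for Z
    unfolding eq using finR by (rule ex_map)
  have hX: "X (h z) = X (fst z)" for z
    by (rule X) (auto simp: h_def split: prod.splits)
  have hY: "Y (h z) = Y (snd z)" for z
    by (rule Y) (use AB in \<open>auto simp: h_def split: prod.splits\<close>)
  have e1: "ex (Pi_pmf I dflt P) (\<lambda>f. X f * Y f) = ex (Pi_pmf A dflt P) X * ex (Pi_pmf (I - A) dflt P) Y"
    unfolding gen hX hY R_def by (rule ex_pair)
  have e2: "ex (Pi_pmf I dflt P) X = ex (Pi_pmf A dflt P) X"
    using ex_pair[where X=X and Y="\<lambda>_. 1" and A="Pi_pmf A dflt P" and B="Pi_pmf (I - A) dflt P"] fin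
    unfolding gen hX R_def by (simp add: ex_const finite_set_Pi_bool)
  have e3: "ex (Pi_pmf I dflt P) Y = ex (Pi_pmf (I - A) dflt P) Y"
    using ex_pair[where X="\<lambda>_. 1" and Y=Y and A="Pi_pmf A dflt P" and B="Pi_pmf (I - A) dflt P"] fA
    unfolding gen hY R_def by (simp add: ex_const finite_set_Pi_bool)
  show ?thesis using e1 e2 e3 by simp
qed

abbreviation Q :: "nat set \<Rightarrow> real \<Rightarrow> (nat \<Rightarrow> bool) pmf" where
  "Q I p \<equiv> Pi_pmf I False (\<lambda>_. bernoulli_pmf p)"

lemma ex_all:
  assumes fin: "finite I" and B: "B \<subseteq> I" and p: "0 \<le> p" "p \<le> 1"
  shows "ex (Q I p) (\<lambda>f. of_bool (\<forall>i\<in>B. f i)) = p ^ card B"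
proof -
  have "ex (Q I p) (\<lambda>f. of_bool (\<forall>i\<in>B. f i))
      = ex (Q I p) (\<lambda>f. \<Prod>i\<in>I. (\<lambda>i b. if i \<in> B then of_bool b else 1) i (f i))"
  proof (rule ex_cong)
    fix f
    have "(\<Prod>i\<in>I. (if i \<in> B then of_bool (f i) else 1) :: real) = (\<Prod>i\<in>I \<inter> B. of_bool (f i) :: real)"
      using fin by (simp add: prod.inter_restrict)
    also have "I \<inter> B = B" using B by auto
    also have "(\<Prod>i\<in>B. of_bool (f i) :: real) = of_bool (\<forall>i\<in>B. f i)"
      using fin B finite_subset by (induction B rule: infinite_finite_induct) auto
    finally show "(of_bool (\<forall>i\<in>B. f i) :: real) = (\<Prod>i\<in>I. (\<lambda>i b. if i \<in> B then of_bool b else 1) i (f i))"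
      by (rule sym)
  qed
  also have "\<dots> = (\<Prod>i\<in>I. measure_pmf.expectation (bernoulli_pmf p) (\<lambda>b. if i \<in> B then of_bool b else 1))"
    using fin by (subst ex_expectation, simp add: finite_set_Pi_bool, rule expectation_prod_Pi_pmf) (auto intro!: integrable_measure_pmf_finite)
  also have "\<dots> = (\<Prod>i\<in>I. if i \<in> B then p else 1)"
    using p by (intro prod.cong) (auto simp: integral_bernoulli_pmf)
  also have "\<dots> = p ^ card (I \<inter> B)"
    using fin by (simp add: prod.inter_restrict[symmetric])
  also have "I \<inter> B = B" using B by auto
  finally show ?thesis .
qed

lemma ex_coord:
  assumes "finite I" "v \<in> I" "0 \<le> p" "p \<le> 1"
  shows "ex (Q I p) (\<lambda>f. of_bool (f v)) = p"
  using ex_all[of I "{v}" p] assms by simp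

lemma ex_binom:
  assumes fin: "finite I" and N: "N \<subseteq> I" and p: "0 \<le> p" "p \<le> 1"
  shows "ex (Q I p) (\<lambda>f. of_bool (card {u\<in>N. f u} = k)) = pmf (binomial_pmf (card N) p) k"
proof -
  have fN: "finite N" using fin N finite_subset by blast
  have "binomial_pmf (card N) p = map_pmf (\<lambda>f. card {x\<in>N. f x}) (Pi_pmf N False (\<lambda>_. bernoulli_pmf p))"
    using fN p by (intro binomial_pmf_altdef') auto
  also have "Pi_pmf N False (\<lambda>_. bernoulli_pmf p) = map_pmf (\<lambda>f x. if x \<in> N then f x else False) (Q I p)"
    using fin N by (rule Pi_pmf_subset)
  also have "map_pmf (\<lambda>f. card {x\<in>N. f x}) \<dots> = map_pmf (\<lambda>f. card {x\<in>N. f x}) (Q I p)"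
    by (simp add: map_pmf_comp cong: conj_cong)
  finally have "pmf (binomial_pmf (card N) p) k = measure_pmf.prob (Q I p) ((\<lambda>f. card {x\<in>N. f x}) -` {k})"
    by (simp add: pmf_map)
  also have "\<dots> = measure_pmf.prob (Q I p) {f. card {x\<in>N. f x} = k}"
    by (simp add: vimage_def)
  also have "\<dots> = ex (Q I p) (\<lambda>f. of_bool (card {u\<in>N. f u} = k))"
    using fin by (intro prob_ex finite_set_Pi_bool)
  finally show ?thesis by simp
qed


definition Nb :: "nat set set \<Rightarrow> nat \<Rightarrow> nat set" where
  "Nb E v = {u. {u, v} \<in> E}"

lemma sg_edge:
  assumes "E \<in> simple_graphs_deg n d" "e \<in> E"
  shows "\<exists>i j. i < n \<and> j < n \<and> i \<noteq> j \<and> e = {i, j}"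
  using assms unfolding simple_graphs_deg_def by auto

lemma sg_deg:
  assumes "E \<in> simple_graphs_deg n d" "i < n"
  shows "card {e\<in>E. i \<in> e} = d i"
  using assms unfolding simple_graphs_deg_def by auto

lemma sg_finite:
  assumes "E \<in> simple_graphs_deg n d"
  shows "finite E"
proof -
  have "E \<subseteq> Pow {..<n}" using sg_edge[OF assms] by fastforce
  then show ?thesis by (rule finite_subset) auto
qed

lemma sg_edge_sub:
  assumes "E \<in> simple_graphs_deg n d" "e \<in> E"
  shows "e \<subseteq> {..<n}" "card e = 2"
  using sg_edge[OF assms] by auto

lemma sg_pair:
  assumes "E \<in> simple_graphs_deg n d" "{u, v} \<in> E"
  shows "u \<noteq> v" "u < n" "v < n"
proof -
  obtain i j where "i < n" "j < n" "i \<noteq> j" "{u, v} = {i, j}"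
    using sg_edge[OF assms] by blast
  then show "u \<noteq> v" "u < n" "v < n" by (auto simp: doubleton_eq_iff)
qed

lemma Nb_sub:
  assumes "E \<in> simple_graphs_deg n d"
  shows "Nb E v \<subseteq> {..<n}" "v \<notin> Nb E v" "finite (Nb E v)"
proof -
  show "Nb E v \<subseteq> {..<n}" using sg_pair[OF assms] unfolding Nb_def by auto
  then show "finite (Nb E v)" by (rule finite_subset) auto
  show "v \<notin> Nb E v" using sg_pair(1)[OF assms, of v v] unfolding Nb_def by auto
qed

lemma Nb_sym: "u \<in> Nb E v \<longleftrightarrow> v \<in> Nb E u"
  unfolding Nb_def by (simp add: insert_commute)

lemma card_edges_at:
  assumes hE: "E \<in> simple_graphs_deg n d"
  shows "card {e\<in>E. v \<in> e \<and> P e} = card {u\<in>Nb E v. P {u, v}}"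
proof -
  have "bij_betw (\<lambda>u. {u, v}) {u\<in>Nb E v. P {u, v}} {e\<in>E. v \<in> e \<and> P e}"
  proof (rule bij_betw_imageI)
    show "inj_on (\<lambda>u. {u, v}) {u\<in>Nb E v. P {u, v}}"
      by (auto simp: inj_on_def doubleton_eq_iff)
    show "(\<lambda>u. {u, v}) ` {u\<in>Nb E v. P {u, v}} = {e\<in>E. v \<in> e \<and> P e}"
    proof
      show "(\<lambda>u. {u, v}) ` {u\<in>Nb E v. P {u, v}} \<subseteq> {e\<in>E. v \<in> e \<and> P e}"
        by (auto simp: Nb_def)
      show "{e\<in>E. v \<in> e \<and> P e} \<subseteq> (\<lambda>u. {u, v}) ` {u\<in>Nb E v. P {u, v}}"
      proof
        fix e assume e: "e \<in> {e\<in>E. v \<in> e \<and> P e}"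
        then obtain i j where "e = {i, j}" using sg_edge[OF hE] by blast
        then obtain u where "e = {u, v}" using e by auto
        then show "e \<in> (\<lambda>u. {u, v}) ` {u\<in>Nb E v. P {u, v}}"
          using e by (auto simp: Nb_def)
      qed
    qed
  qed
  then show ?thesis by (simp add: bij_betw_same_card)
qed

lemma card_Nb:
  assumes "E \<in> simple_graphs_deg n d" "v < n"
  shows "card (Nb E v) = d v"
  using card_edges_at[OF assms(1), of v "\<lambda>_. True"] sg_deg[OF assms] by simp

lemma handshake:
  assumes "finite V" "finite F" "\<And>e. e \<in> F \<Longrightarrow> e \<subseteq> V \<and> card e = 2"
  shows "(\<Sum>v\<in>V. card {e\<in>F. v \<in> e}) = 2 * card F"
proof -
  have "(\<Sum>v\<in>V. card {e\<in>F. v \<in> e}) = (\<Sum>v\<in>V. \<Sum>e\<in>F. if v \<in> e then 1 else 0)"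
    using assms by (simp add: sum.If_cases Int_def)
  also have "\<dots> = (\<Sum>e\<in>F. \<Sum>v\<in>V. if v \<in> e then 1 else 0)"
    by (rule sum.swap)
  also have "\<dots> = (\<Sum>e\<in>F. card (V \<inter> e))"
    using assms by (simp add: sum.If_cases)
  also have "\<dots> = (\<Sum>e\<in>F. 2)"
    using assms by (intro sum.cong) (auto simp: Int_absorb1)
  finally show ?thesis by simp
qed

lemma handshake_E:
  assumes "E \<in> simple_graphs_deg n d"
  shows "2 * card E = (\<Sum>i<n. d i)"
proof -
  have "(\<Sum>v\<in>{..<n}. card {e\<in>E. v \<in> e}) = 2 * card E"
    using assms by (intro handshake sg_finite) (auto dest: sg_edge_sub)
  moreover have "(\<Sum>v\<in>{..<n}. card {e\<in>E. v \<in> e}) = (\<Sum>i<n. d i)"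
    using sg_deg[OF assms] by (intro sum.cong) auto
  ultimately show ?thesis by simp
qed

lemma sum_list_filter_sort:
  "sum_list (filter P (sort xs)) = sum_list (filter P (xs :: nat list))"
proof -
  have "sum_list (filter P (sort xs)) = sum_mset (mset (filter P (sort xs)))"
    by (rule sum_mset_sum_list[symmetric])
  also have "mset (filter P (sort xs)) = mset (filter P xs)"
    by simp
  also have "sum_mset \<dots> = sum_list (filter P xs)"
    by (rule sum_mset_sum_list)
  finally show ?thesis .
qed

lemma sum_list_filter_map:
  "sum_list (filter P (map g xs)) = sum_list (map (\<lambda>v. if P (g v) then g v else 0) (xs :: 'a list))"
  by (induction xs) auto

lemma seqMJ_induced:
  assumes "finite S"
  shows "seqMJ (induced_degseq E S)
    = (\<Sum>v\<in>S. if card {e\<in>E. v \<in> e \<and> e \<subseteq> S} \<noteq> 2 then card {e\<in>E. v \<in> e \<and> e \<subseteq> S} else 0)"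
  unfolding seqMJ_def induced_degseq_def sum_list_filter_sort sum_list_filter_map
  using assms by (simp add: sum_list_distinct_conv_sum_set)

lemma seqMJ_induced_real:
  assumes hE: "E \<in> simple_graphs_deg n d" and S: "S \<subseteq> {..<n}"
  shows "real (seqMJ (induced_degseq E S))
    = 2 * real (card {e\<in>E. e \<subseteq> S}) - 2 * real (card {v\<in>S. card {e\<in>E. v \<in> e \<and> e \<subseteq> S} = 2})"
proof -
  have fS: "finite S" using S finite_subset by blast
  define dg where "dg v = card {e\<in>E. v \<in> e \<and> e \<subseteq> S}" for v
  have "(\<Sum>v\<in>S. dg v) = 2 * card {e\<in>E. e \<subseteq> S}"
  proof -
    have "(\<Sum>v\<in>S. card {e\<in>{e\<in>E. e \<subseteq> S}. v \<in> e}) = 2 * card {e\<in>E. e \<subseteq> S}"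
      using fS sg_finite[OF hE] by (intro handshake) (auto dest: sg_edge_sub[OF hE])
    moreover have "{e\<in>{e\<in>E. e \<subseteq> S}. v \<in> e} = {e\<in>E. v \<in> e \<and> e \<subseteq> S}" for v
      by auto
    ultimately show ?thesis by (simp add: dg_def)
  qed
  moreover have "(\<Sum>v\<in>S. dg v) = (\<Sum>v\<in>S. if dg v \<noteq> 2 then dg v else 0) + 2 * card {v\<in>S. dg v = 2}"
  proof -
    have "(\<Sum>v\<in>S. dg v) = (\<Sum>v\<in>S. (if dg v \<noteq> 2 then dg v else 0) + (if dg v = 2 then 2 else 0))"
      by (intro sum.cong) auto
    also have "\<dots> = (\<Sum>v\<in>S. if dg v \<noteq> 2 then dg v else 0) + (\<Sum>v\<in>S. if dg v = 2 then 2 else 0)"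
      by (rule sum.distrib)
    also have "(\<Sum>v\<in>S. if dg v = 2 then 2 else 0) = 2 * card {v\<in>S. dg v = 2}"
      using fS by (simp add: sum.If_cases Int_def)
    finally show ?thesis .
  qed
  moreover have "seqMJ (induced_degseq E S) = (\<Sum>v\<in>S. if dg v \<noteq> 2 then dg v else 0)"
    unfolding dg_def using seqMJ_induced[OF fS] .
  ultimately show ?thesis unfolding dg_def by linarith
qed


lemma card_filter_real:
  assumes "finite A"
  shows "real (card {x\<in>A. P x}) = (\<Sum>x\<in>A. of_bool (P x))"
  using assms by (simp add: of_bool_def sum.If_cases Int_def)

locale fixed_graph =
  fixes n :: nat and d :: "nat \<Rightarrow> nat" and E :: "nat set set" and p :: real and D :: nat
  assumes hE: "E \<in> simple_graphs_deg n d"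
  assumes p: "0 \<le> p" "p \<le> 1"
  assumes D: "\<And>i. i < n \<Longrightarrow> d i \<le> D"
begin

abbreviation "QQ \<equiv> Q {..<n} p"

definition Xe :: "nat set \<Rightarrow> (nat \<Rightarrow> bool) \<Rightarrow> real" where
  "Xe e f = of_bool (\<forall>i\<in>e. f i)"

definition Wv :: "nat \<Rightarrow> (nat \<Rightarrow> bool) \<Rightarrow> real" where
  "Wv v f = of_bool (f v) * of_bool (card {u\<in>Nb E v. f u} = 2)"

definition NN :: "nat \<Rightarrow> nat set" where
  "NN v = insert v (Nb E v)"

lemma finE: "finite E" using sg_finite[OF hE] .

lemma finQ: "finite (set_pmf QQ)" by (simp add: finite_set_Pi_bool)

lemma eS_eq:
  "real (card {e\<in>E. e \<subseteq> {i\<in>{..<n}. f i}}) = (\<Sum>e\<in>E. Xe e f)"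
proof -
  have "{e\<in>E. e \<subseteq> {i\<in>{..<n}. f i}} = {e\<in>E. \<forall>i\<in>e. f i}"
    using sg_edge_sub(1)[OF hE] by blast
  then show ?thesis using finE by (simp add: card_filter_real Xe_def)
qed

lemma n2_eq:
  "real (card {v\<in>{i\<in>{..<n}. f i}. card {e\<in>E. v \<in> e \<and> e \<subseteq> {i\<in>{..<n}. f i}} = 2})
     = (\<Sum>v\<in>{..<n}. Wv v f)"
proof -
  have set_eq: "{v\<in>{i\<in>{..<n}. f i}. card {e\<in>E. v \<in> e \<and> e \<subseteq> {i\<in>{..<n}. f i}} = 2}
      = {v\<in>{..<n}. f v \<and> card {u\<in>Nb E v. f u} = 2}"
  proof (rule Collect_cong)
    fix v
    have key: "f v \<Longrightarrow> card {e\<in>E. v \<in> e \<and> e \<subseteq> {i\<in>{..<n}. f i}} = card {u\<in>Nb E v. f u}"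
    proof -
      assume fv: "f v"
      have "card {e\<in>E. v \<in> e \<and> e \<subseteq> {i\<in>{..<n}. f i}} = card {u\<in>Nb E v. {u, v} \<subseteq> {i\<in>{..<n}. f i}}"
        by (rule card_edges_at[OF hE])
      also have "{u\<in>Nb E v. {u, v} \<subseteq> {i\<in>{..<n}. f i}} = {u\<in>Nb E v. f u}"
        using fv sg_pair[OF hE] unfolding Nb_def by auto
      finally show ?thesis .
    qed
    show "v \<in> {i \<in> {..<n}. f i} \<and> card {e \<in> E. v \<in> e \<and> e \<subseteq> {i \<in> {..<n}. f i}} = 2
          \<longleftrightarrow> v \<in> {..<n} \<and> f v \<and> card {u \<in> Nb E v. f u} = 2"
      using key by auto
  qed
  have "real (card {v\<in>{..<n}. f v \<and> card {u\<in>Nb E v. f u} = 2})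
        = (\<Sum>v<n. of_bool (f v \<and> card {u\<in>Nb E v. f u} = 2))"
    by (rule card_filter_real) simp
  also have "\<dots> = (\<Sum>v<n. Wv v f)"
    by (intro sum.cong) (auto simp: Wv_def)
  finally show ?thesis unfolding set_eq .
qed

lemma ex_Xe: "e \<in> E \<Longrightarrow> ex QQ (Xe e) = p\<^sup>2"
  unfolding Xe_def using ex_all[of "{..<n}" e p] p sg_edge_sub[OF hE] by auto

lemma ex_Wv:
  assumes v: "v < n"
  shows "ex QQ (Wv v) = p * pmf (binomial_pmf (d v) p) 2"
proof -
  have "ex QQ (Wv v) = ex QQ (\<lambda>f. of_bool (f v)) * ex QQ (\<lambda>f. of_bool (card {u\<in>Nb E v. f u} = 2))"
    unfolding Wv_def
  proof (rule ex_indep[where A="{v}" and B="Nb E v"])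
    show "{v} \<subseteq> {..<n}" using v by auto
    show "Nb E v \<subseteq> {..<n}" "{v} \<inter> Nb E v = {}" using Nb_sub[OF hE] by auto
    fix f g :: "nat \<Rightarrow> bool"
    assume "\<And>i. i \<in> Nb E v \<Longrightarrow> f i = g i"
    then have "{u\<in>Nb E v. f u} = {u\<in>Nb E v. g u}" by auto
    then show "of_bool (card {u\<in>Nb E v. f u} = 2) = (of_bool (card {u\<in>Nb E v. g u} = 2) :: real)"
      by simp
  qed auto
  also have "\<dots> = p * pmf (binomial_pmf (card (Nb E v)) p) 2"
    using v p Nb_sub[OF hE] by (simp add: ex_coord ex_binom)
  finally show ?thesis using card_Nb[OF hE v] by simp
qed

lemma Xe_indep:
  assumes "e \<in> E" "e' \<in> E" "e \<inter> e' = {}"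
  shows "ex QQ (\<lambda>f. Xe e f * Xe e' f) = ex QQ (Xe e) * ex QQ (Xe e')"
  unfolding Xe_def
  by (rule ex_indep[where A=e and B=e']) (use assms sg_edge_sub[OF hE] in auto)

lemma Wv_indep:
  assumes "v < n" "w < n" "NN v \<inter> NN w = {}"
  shows "ex QQ (\<lambda>f. Wv v f * Wv w f) = ex QQ (Wv v) * ex QQ (Wv w)"
proof (rule ex_indep[where A="NN v" and B="NN w"])
  show "NN v \<subseteq> {..<n}" "NN w \<subseteq> {..<n}" using assms Nb_sub[OF hE] by (auto simp: NN_def)
  show "NN v \<inter> NN w = {}" by fact
  fix f g :: "nat \<Rightarrow> bool"
  show "(\<And>i. i \<in> NN v \<Longrightarrow> f i = g i) \<Longrightarrow> Wv v f = Wv v g"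
  proof -
    assume a: "\<And>i. i \<in> NN v \<Longrightarrow> f i = g i"
    then have "{u\<in>Nb E v. f u} = {u\<in>Nb E v. g u}" "f v = g v" by (auto simp: NN_def)
    then show ?thesis by (simp add: Wv_def)
  qed
  show "(\<And>i. i \<in> NN w \<Longrightarrow> f i = g i) \<Longrightarrow> Wv w f = Wv w g"
  proof -
    assume a: "\<And>i. i \<in> NN w \<Longrightarrow> f i = g i"
    then have "{u\<in>Nb E w. f u} = {u\<in>Nb E w. g u}" "f w = g w" by (auto simp: NN_def)
    then show ?thesis by (simp add: Wv_def)
  qed
qed simp

lemma Xe_nonneg: "0 \<le> Xe e f" by (simp add: Xe_def)
lemma Wv_nonneg: "0 \<le> Wv e f" by (simp add: Wv_def)

lemma Xe_prod_le: "e \<in> E \<Longrightarrow> ex QQ (\<lambda>f. Xe e f * Xe e' f) \<le> p"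
proof -
  assume e: "e \<in> E"
  have "ex QQ (\<lambda>f. Xe e f * Xe e' f) \<le> ex QQ (Xe e)"
    by (rule ex_mono) (auto simp: Xe_def)
  also have "\<dots> = p\<^sup>2" using ex_Xe[OF e] .
  also have "\<dots> \<le> p" using p by (simp add: power2_eq_square mult_left_le)
  finally show ?thesis .
qed

lemma Wv_prod_le: "v < n \<Longrightarrow> ex QQ (\<lambda>f. Wv v f * Wv w f) \<le> p"
proof -
  assume v: "v < n"
  have "ex QQ (\<lambda>f. Wv v f * Wv w f) \<le> ex QQ (\<lambda>f. of_bool (f v))"
    by (rule ex_mono) (auto simp: Wv_def)
  also have "\<dots> = p" using v p by (simp add: ex_coord)
  finally show ?thesis .
qed

lemma dep_edges: "e \<in> E \<Longrightarrow> card {e'\<in>E. e \<inter> e' \<noteq> {}} \<le> 2 * D"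
proof -
  assume e: "e \<in> E"
  have fe: "finite e" "card e = 2" using sg_edge_sub[OF hE e] by (auto intro: finite_subset)
  have "{e'\<in>E. e \<inter> e' \<noteq> {}} = (\<Union>x\<in>e. {e'\<in>E. x \<in> e'})" by auto
  then have "card {e'\<in>E. e \<inter> e' \<noteq> {}} \<le> (\<Sum>x\<in>e. card {e'\<in>E. x \<in> e'})"
    using card_UN_le[OF fe(1), of "\<lambda>x. {e'\<in>E. x \<in> e'}"] by simp
  also have "\<dots> \<le> (\<Sum>x\<in>e. D)"
  proof (rule sum_mono)
    fix x assume "x \<in> e"
    then have "x < n" using sg_edge_sub[OF hE e] by auto
    then show "card {e'\<in>E. x \<in> e'} \<le> D" using sg_deg[OF hE] D by simp
  qed
  also have "\<dots> = 2 * D" using fe by simp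
  finally show ?thesis .
qed

lemma card_NN: "x < n \<Longrightarrow> card (NN x) = 1 + d x"
  unfolding NN_def using Nb_sub[OF hE, of x] card_Nb[OF hE, of x] by simp

lemma finite_NN: "finite (NN x)"
  unfolding NN_def using Nb_sub[OF hE, of x] by simp

lemma dep_verts: "v < n \<Longrightarrow> card {w\<in>{..<n}. NN v \<inter> NN w \<noteq> {}} \<le> (1 + d v) * (1 + D)"
proof -
  assume v: "v < n"
  have sub: "{w\<in>{..<n}. NN v \<inter> NN w \<noteq> {}} \<subseteq> (\<Union>x\<in>NN v. NN x)"
  proof
    fix w assume "w \<in> {w\<in>{..<n}. NN v \<inter> NN w \<noteq> {}}"
    then obtain x where x: "x \<in> NN v" "x \<in> NN w" by auto
    then have "w \<in> NN x" unfolding NN_def using Nb_sym by auto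
    then show "w \<in> (\<Union>x\<in>NN v. NN x)" using x by auto
  qed
  have "card {w\<in>{..<n}. NN v \<inter> NN w \<noteq> {}} \<le> card (\<Union>x\<in>NN v. NN x)"
    by (rule card_mono[OF _ sub]) (simp add: finite_NN)
  also have "\<dots> \<le> (\<Sum>x\<in>NN v. card (NN x))"
    by (rule card_UN_le) (simp add: finite_NN)
  also have "\<dots> \<le> (\<Sum>x\<in>NN v. 1 + D)"
  proof (rule sum_mono)
    fix x assume "x \<in> NN v"
    then have "x < n" using v Nb_sub[OF hE, of v] by (auto simp: NN_def)
    then show "card (NN x) \<le> 1 + D" using card_NN D by simp
  qed
  also have "\<dots> = (1 + d v) * (1 + D)" using card_NN[OF v] by simp
  finally show ?thesis .
qed

lemma var_e:
  "ex QQ (\<lambda>f. ((\<Sum>e\<in>E. Xe e f) - p\<^sup>2 * real (card E))\<^sup>2) \<le> 2 * D * p * card E"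
proof -
  have mu: "(\<Sum>e\<in>E. ex QQ (Xe e)) = p\<^sup>2 * real (card E)"
    using ex_Xe by simp
  have "ex QQ (\<lambda>f. ((\<Sum>e\<in>E. Xe e f) - (\<Sum>e\<in>E. ex QQ (Xe e)))\<^sup>2)
        \<le> (\<Sum>e\<in>E. \<Sum>e'\<in>{e'\<in>E. e \<inter> e' \<noteq> {}}. ex QQ (\<lambda>f. Xe e f * Xe e' f))"
    by (rule var_bound[OF finQ finE]) (auto intro: Xe_indep Xe_nonneg)
  also have "\<dots> \<le> (\<Sum>e\<in>E. \<Sum>e'\<in>{e'\<in>E. e \<inter> e' \<noteq> {}}. p)"
    by (intro sum_mono Xe_prod_le) auto
  also have "\<dots> = (\<Sum>e\<in>E. real (card {e'\<in>E. e \<inter> e' \<noteq> {}}) * p)"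
    by simp
  also have "\<dots> \<le> (\<Sum>e\<in>E. real (2 * D) * p)"
    using p dep_edges by (intro sum_mono mult_right_mono) (auto simp del: of_nat_mult)
  also have "\<dots> = 2 * D * p * card E" by simp
  finally show ?thesis unfolding mu .
qed

lemma var_n:
  "ex QQ (\<lambda>f. ((\<Sum>v<n. Wv v f) - (\<Sum>v<n. p * pmf (binomial_pmf (d v) p) 2))\<^sup>2)
     \<le> p * (\<Sum>v<n. real ((1 + d v) * (1 + D)))"
proof -
  have mu: "(\<Sum>v<n. ex QQ (Wv v)) = (\<Sum>v<n. p * pmf (binomial_pmf (d v) p) 2)"
    using ex_Wv by simp
  have "ex QQ (\<lambda>f. ((\<Sum>v<n. Wv v f) - (\<Sum>v<n. ex QQ (Wv v)))\<^sup>2)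
        \<le> (\<Sum>v<n. \<Sum>w\<in>{w\<in>{..<n}. NN v \<inter> NN w \<noteq> {}}. ex QQ (\<lambda>f. Wv v f * Wv w f))"
    by (rule var_bound[OF finQ]) (auto intro: Wv_indep Wv_nonneg)
  also have "\<dots> \<le> (\<Sum>v<n. \<Sum>w\<in>{w\<in>{..<n}. NN v \<inter> NN w \<noteq> {}}. p)"
    by (intro sum_mono Wv_prod_le) auto
  also have "\<dots> = (\<Sum>v<n. real (card {w\<in>{..<n}. NN v \<inter> NN w \<noteq> {}}) * p)"
    by simp
  also have "\<dots> \<le> (\<Sum>v<n. real ((1 + d v) * (1 + D)) * p)"
  proof (intro sum_mono mult_right_mono)
    fix v assume "v \<in> {..<n}"
    then show "real (card {w\<in>{..<n}. NN v \<inter> NN w \<noteq> {}}) \<le> real ((1 + d v) * (1 + D))"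
      using dep_verts by (simp only: of_nat_le_iff lessThan_iff)
  qed (use p in simp)
  also have "\<dots> = p * (\<Sum>v<n. real ((1 + d v) * (1 + D)))"
    by (simp add: sum_distrib_left mult.commute)
  finally show ?thesis unfolding mu .
qed

end


lemma sum_list_concat_rep:
  "sum_list (concat (map (\<lambda>k. replicate (c k) k) xs)) = sum_list (map (\<lambda>k. c k * k) (xs :: nat list))"
  by (induction xs) (auto simp: sum_list_replicate)

lemma sum_list_filter_concat_rep:
  "sum_list (filter P (concat (map (\<lambda>k. replicate (c k) k) xs)))
     = sum_list (map (\<lambda>k. if P k then c k * k else 0) (xs :: nat list))"
  by (induction xs) (auto simp: sum_list_replicate filter_replicate)

lemma seqM_dA:
  "seqM (dA n d p) = (\<Sum>k<Suc (Max (insert 0 (d ` {..<n}))). nA n d p k * k)"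
  unfolding seqM_def dA_def sum_list_concat_rep interv_sum_list_conv_sum_set_nat
  by (simp add: lessThan_atLeast0)

lemma seqMJ_dA:
  "seqMJ (dA n d p) = (\<Sum>k<Suc (Max (insert 0 (d ` {..<n}))). if k \<noteq> 2 then nA n d p k * k else 0)"
  unfolding seqMJ_def dA_def sum_list_filter_concat_rep interv_sum_list_conv_sum_set_nat
  by (simp add: lessThan_atLeast0)

lemma binom_mean:
  assumes p: "0 \<le> p" "p \<le> 1" and dm: "d \<le> m"
  shows "(\<Sum>k\<le>m. real k * pmf (binomial_pmf d p) k) = d * p"
proof -
  have fin: "finite (set_pmf (binomial_pmf d p))" using p by (intro finite_set_pmf_binomial_pmf) auto
  have sub: "set_pmf (binomial_pmf d p) \<subseteq> {..m}"
  proof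
    fix k assume "k \<in> set_pmf (binomial_pmf d p)"
    then have "pmf (binomial_pmf d p) k \<noteq> 0" by (simp add: set_pmf_iff)
    then have "k \<le> d" using p by (auto simp: binomial_eq_0)
    then show "k \<in> {..m}" using dm by auto
  qed
  have first: "(\<Sum>k\<le>m. real k * pmf (binomial_pmf d p) k) = ex (binomial_pmf d p) real"
    unfolding ex_def
    by (rule sum.mono_neutral_cong_right[OF _ sub]) (auto simp: set_pmf_iff)
  have bin: "binomial_pmf d p = map_pmf (\<lambda>f. card {x\<in>{..<d}. f x}) (Q {..<d} p)"
    using p by (intro binomial_pmf_altdef') auto
  have "ex (binomial_pmf d p) real = ex (Q {..<d} p) (\<lambda>f. real (card {x\<in>{..<d}. f x}))"
    unfolding bin by (rule ex_map) (simp add: finite_set_Pi_bool)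
  also have "\<dots> = ex (Q {..<d} p) (\<lambda>f. \<Sum>x<d. of_bool (f x))"
    by (intro ex_cong) (simp add: of_bool_def sum.If_cases Int_def)
  also have "\<dots> = (\<Sum>x<d. ex (Q {..<d} p) (\<lambda>f. of_bool (f x)))"
    by (rule ex_sum)
  also have "\<dots> = (\<Sum>x<d. p)"
    using p by (intro sum.cong) (auto simp: ex_coord)
  finally show ?thesis using first by simp
qed

definition aa :: "nat \<Rightarrow> (nat \<Rightarrow> nat) \<Rightarrow> real \<Rightarrow> nat \<Rightarrow> real" where
  "aa n d p k = p * (\<Sum>i<n. pmf (binomial_pmf (d i) p) k)"

lemma aa_nonneg: "0 \<le> p \<Longrightarrow> 0 \<le> aa n d p k"
  unfolding aa_def by (simp add: sum_nonneg)

lemma Ntil_eq: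
  assumes p: "0 \<le> p" "p \<le> 1"
  shows "Ntil n d p k = \<lfloor>(\<Sum>j\<le>k. aa n d p j) + 1/2\<rfloor>"
proof -
  have "measure_pmf.prob (binomial_pmf (d i) p) {..k} = (\<Sum>j\<le>k. pmf (binomial_pmf (d i) p) j)" for i
    by (rule measure_measure_pmf_finite) simp
  then have "p * (\<Sum>i<n. measure_pmf.prob (binomial_pmf (d i) p) {..k}) = (\<Sum>j\<le>k. aa n d p j)"
    unfolding aa_def by (simp add: sum_distrib_left sum.swap[of _ "{..<n}"])
  then show ?thesis unfolding Ntil_def by simp
qed

lemma floor_half: "\<bar>real_of_int \<lfloor>x + 1/2\<rfloor> - x\<bar> \<le> 1/2"
proof -
  have "real_of_int \<lfloor>x + 1/2\<rfloor> \<le> x + 1/2" "x + 1/2 < real_of_int \<lfloor>x + 1/2\<rfloor> + 1"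
    by linarith+
  then show ?thesis by linarith
qed

lemma nA_approx:
  assumes p: "0 \<le> p" "p \<le> 1"
  shows "\<bar>real (nA n d p k) - aa n d p k\<bar> \<le> 1"
proof (cases k)
  case 0
  let ?x = "aa n d p 0"
  have N: "Ntil n d p 0 = \<lfloor>?x + 1/2\<rfloor>" using Ntil_eq[OF p, of n d 0] by simp
  have "0 \<le> ?x" using aa_nonneg p by auto
  then have nn: "0 \<le> \<lfloor>?x + 1/2\<rfloor>" by simp
  have "real (nA n d p k) = real_of_int \<lfloor>?x + 1/2\<rfloor>"
    unfolding nA_def using 0 N nn by simp
  then show ?thesis using floor_half[of ?x] 0 by simp
next
  case (Suc j)
  let ?F = "\<lambda>k. (\<Sum>i\<le>k. aa n d p i)"
  have F: "?F (Suc j) = ?F j + aa n d p (Suc j)" by simp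
  have N1: "Ntil n d p (Suc j) = \<lfloor>?F (Suc j) + 1/2\<rfloor>" "Ntil n d p j = \<lfloor>?F j + 1/2\<rfloor>"
    using Ntil_eq[OF p] by blast+
  have "\<lfloor>?F j + 1/2\<rfloor> \<le> \<lfloor>?F (Suc j) + 1/2\<rfloor>"
    using aa_nonneg[OF p(1)] F by (intro floor_mono) simp
  then have "real (nA n d p (Suc j)) = real_of_int \<lfloor>?F (Suc j) + 1/2\<rfloor> - real_of_int \<lfloor>?F j + 1/2\<rfloor>"
    unfolding nA_def using Suc N1 by simp
  then show ?thesis unfolding Suc using floor_half[of "?F (Suc j)"] floor_half[of "?F j"] F by linarith
qed

lemma weighted_approx:
  assumes p: "0 \<le> p" "p \<le> 1" and w: "\<And>k. 0 \<le> w k" "\<And>k. k < Suc m \<Longrightarrow> w k \<le> real m"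
  shows "\<bar>(\<Sum>k<Suc m. w k * real (nA n d p k)) - (\<Sum>k<Suc m. w k * aa n d p k)\<bar> \<le> (real m + 1)\<^sup>2"
proof -
  have "\<bar>(\<Sum>k<Suc m. w k * real (nA n d p k)) - (\<Sum>k<Suc m. w k * aa n d p k)\<bar>
      = \<bar>\<Sum>k<Suc m. w k * (real (nA n d p k) - aa n d p k)\<bar>"
    by (simp add: sum_subtractf right_diff_distrib)
  also have "\<dots> \<le> (\<Sum>k<Suc m. \<bar>w k * (real (nA n d p k) - aa n d p k)\<bar>)"
    by (rule sum_abs)
  also have "\<dots> \<le> (\<Sum>k<Suc m. real m * 1)"
  proof (rule sum_mono)
    fix k assume "k \<in> {..<Suc m}"
    then have "w k \<le> real m" using w by auto
    have "w k * \<bar>real (nA n d p k) - aa n d p k\<bar> \<le> real m * 1"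
      using nA_approx[OF p, of n d k] w(1)[of k] \<open>w k \<le> real m\<close> by (intro mult_mono) auto
    then show "\<bar>w k * (real (nA n d p k) - aa n d p k)\<bar> \<le> real m * 1"
      using w(1)[of k] by (simp add: abs_mult)
  qed
  also have "\<dots> = (real m + 1) * real m" by simp
  also have "\<dots> \<le> (real m + 1)\<^sup>2" by (simp add: power2_eq_square)
  finally show ?thesis .
qed

lemma Max_deg:
  fixes d :: "nat \<Rightarrow> nat"
  assumes "i < n"
  shows "d i \<le> Max (insert 0 (d ` {..<n}))"
proof (rule Max_ge)
  show "finite (insert 0 (d ` {..<n}))" by (simp add: finite_imageI)
qed (use assms in auto)

lemma sum_k_aa:
  assumes p: "0 \<le> p" "p \<le> 1"
  shows "(\<Sum>k<Suc (Max (insert 0 (d ` {..<n}))). real k * aa n d p k) = p * p * (\<Sum>i<n. real (d i))"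
proof -
  let ?m = "Max (insert 0 (d ` {..<n}))"
  have "(\<Sum>k<Suc ?m. real k * aa n d p k) = p * (\<Sum>i<n. \<Sum>k\<le>?m. real k * pmf (binomial_pmf (d i) p) k)"
    unfolding aa_def lessThan_Suc_atMost
    by (simp add: sum_distrib_left sum.swap[of _ "{..<n}"] algebra_simps)
  also have "\<dots> = p * (\<Sum>i<n. real (d i) * p)"
    using p Max_deg by (intro arg_cong[where f="\<lambda>x. p * x"] sum.cong binom_mean) auto
  finally show ?thesis by (simp add: sum_distrib_left sum_distrib_right algebra_simps)
qed

lemma sum_kJ_aa:
  assumes p: "0 \<le> p" "p \<le> 1"
  shows "(\<Sum>k<Suc (Max (insert 0 (d ` {..<n}))). (if k \<noteq> 2 then real k else 0) * aa n d p k)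
           = p * p * (\<Sum>i<n. real (d i)) - 2 * aa n d p 2"
proof -
  let ?m = "Max (insert 0 (d ` {..<n}))"
  have "(\<Sum>k<Suc ?m. (if k \<noteq> 2 then real k else 0) * aa n d p k)
      = (\<Sum>k<Suc ?m. real k * aa n d p k - (if k = 2 then 2 * aa n d p 2 else 0))"
    by (intro sum.cong) auto
  also have "\<dots> = (\<Sum>k<Suc ?m. real k * aa n d p k) - (\<Sum>k<Suc ?m. if k = 2 then 2 * aa n d p 2 else 0)"
    by (rule sum_subtractf)
  also have "\<dots> = p * p * (\<Sum>i<n. real (d i)) - (if 2 \<in> {..<Suc ?m} then 2 * aa n d p 2 else 0)"
    by (simp only: sum_k_aa[OF p] sum.delta finite_lessThan)
  also have "(if 2 \<in> {..<Suc ?m} then 2 * aa n d p 2 else 0) = 2 * aa n d p 2"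
  proof (cases "2 \<in> {..<Suc ?m}")
    case False
    then have m2: "?m < 2" unfolding lessThan_iff by linarith
    have "\<And>i. i < n \<Longrightarrow> d i < 2" using Max_deg[of _ n d] m2 by (meson le_less_trans)
    then have "aa n d p 2 = 0" unfolding aa_def using p by (simp add: binomial_eq_0)
    then show ?thesis by simp
  qed simp
  finally show ?thesis .
qed


lemma xexp_le: "x * exp (- x) \<le> exp (-1 :: real)"
proof -
  have "x \<le> exp (x - 1)" using exp_ge_add_one_self[of "x - 1"] by simp
  then have "x * exp (-x) \<le> exp (x - 1) * exp (-x)" by (intro mult_right_mono) auto
  also have "\<dots> = exp (-1)" by (simp flip: exp_add)
  finally show ?thesis .
qed

lemma exp_m1_le: "exp (-1 :: real) \<le> 4/9"
proof -
  have "(3/2 :: real) \<le> exp (1/2)" using exp_ge_add_one_self[of "1/2 :: real"] by simp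
  then have "(3/2 :: real)^2 \<le> exp (1/2) ^ 2" by (intro power_mono) auto
  also have "exp (1/2 :: real) ^ 2 = exp 1" by (simp flip: exp_of_nat_mult)
  finally have "9/4 \<le> exp (1::real)" by (simp add: power2_eq_square)
  then show ?thesis by (simp add: exp_minus field_simps)
qed

lemma key_ineq:
  fixes p :: real and m :: nat
  assumes p: "0 < p" "p < 1" "1 \<le> m"
  shows "(real m + 1) * p * (1 - p) ^ m \<le> 8/9"
proof -
  have "(1 - p) ^ m \<le> exp (-p) ^ m"
    using p by (intro power_mono) (auto simp: exp_ge_add_one_self[of "-p", simplified])
  also have "exp (-p) ^ m = exp (- (m * p))" by (simp flip: exp_of_nat_mult)
  finally have a: "(1 - p) ^ m \<le> exp (- (m * p))" .
  have "(real m + 1) * p * (1 - p) ^ m \<le> (2 * m) * p * exp (- (m * p))"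
    using p a by (intro mult_mono) auto
  also have "\<dots> = 2 * ((m * p) * exp (- (m * p)))" by simp
  also have "\<dots> \<le> 2 * exp (-1)" using xexp_le[of "m * p"] by simp
  also have "\<dots> \<le> 8/9" using exp_m1_le by simp
  finally show ?thesis .
qed

lemma binom2_bound:
  fixes p \<epsilon> :: real and d :: nat
  assumes p: "0 < p" "p < 1 - \<epsilon>" and eps: "0 < \<epsilon>" and d: "1 \<le> d"
  shows "2 * pmf (binomial_pmf d p) 2 \<le> (1 - min (1/9) \<epsilon>) * (real d * p)"
proof -
  let ?c = "min (1/9) \<epsilon>"
  have p1: "p < 1" using p eps by simp
  show ?thesis
  proof (cases "d = 1")
    case True then show ?thesis using p p1 eps by (simp add: binomial_eq_0)
  next
    case False
    define m where "m = d - 2"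
    have m: "d = m + 2" using d False unfolding m_def by linarith
    have ch: "2 * (d choose 2) = d * (d - 1)"
      using times_binomial_minus1_eq[of 2 d] by simp
    have "d - 1 = m + 1" using m by simp
    then have "real (2 * (d choose 2)) = real (d * (m + 1))" using ch by simp
    then have ch': "2 * real (d choose 2) = real d * (real m + 1)" by (simp add: algebra_simps)
    have "2 * pmf (binomial_pmf d p) 2 = 2 * real (d choose 2) * p^2 * (1 - p)^m"
      using p p1 m by simp
    also have "\<dots> = (real d * p) * ((real m + 1) * p * (1 - p)^m)"
      unfolding ch' by (simp add: power2_eq_square algebra_simps)
    also have "\<dots> \<le> (real d * p) * (1 - ?c)"
    proof (rule mult_left_mono)
      show "0 \<le> real d * p" using p by simp
      show "(real m + 1) * p * (1 - p) ^ m \<le> 1 - ?c"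
      proof (cases "m = 0")
        case True then show ?thesis using p by simp
      next
        case False
        then have "(real m + 1) * p * (1 - p) ^ m \<le> 8/9" using key_ineq[OF p(1) p1] by simp
        then show ?thesis by simp
      qed
    qed
    finally show ?thesis by (simp add: mult.commute)
  qed
qed

lemma MJ_main_lower:
  fixes p \<epsilon> :: real and d :: "nat \<Rightarrow> nat"
  assumes p: "0 < p" "p < 1 - \<epsilon>" and eps: "0 < \<epsilon>" and d: "\<And>i. i < n \<Longrightarrow> 1 \<le> d i"
  shows "min (1/9) \<epsilon> * (p * p * (\<Sum>i<n. real (d i))) \<le> p * p * (\<Sum>i<n. real (d i)) - 2 * aa n d p 2"
proof -
  let ?c = "min (1/9) \<epsilon>"
  have "p * p * (\<Sum>i<n. real (d i)) - 2 * aa n d p 2 = p * (\<Sum>i<n. real (d i) * p - 2 * pmf (binomial_pmf (d i) p) 2)"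
    unfolding aa_def by (simp add: sum_subtractf sum_distrib_left sum_distrib_right algebra_simps)
  also have "\<dots> \<ge> p * (\<Sum>i<n. ?c * (real (d i) * p))"
  proof (intro mult_left_mono sum_mono)
    fix i assume "i \<in> {..<n}"
    then show "?c * (real (d i) * p) \<le> real (d i) * p - 2 * pmf (binomial_pmf (d i) p) 2"
      using binom2_bound[OF p eps d[of i]] by (simp add: algebra_simps)
  qed (use p in simp)
  finally show ?thesis by (simp add: sum_distrib_left sum_distrib_right algebra_simps)
qed


lemma ex_pair_gen:
  "ex (pair_pmf A B) Z = ex A (\<lambda>a. ex B (\<lambda>b. Z (a, b)))"
  unfolding ex_def set_pair_pmf sum_distrib_left sum.cartesian_product
  by (intro sum.cong) (auto simp: pmf_pair)

lemma pair_bound: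
  assumes fA: "finite (set_pmf A)" and fB: "finite (set_pmf B)"
    and b: "\<And>a. a \<in> set_pmf A \<Longrightarrow> measure_pmf.prob B {b. P a b} \<le> \<beta>"
  shows "measure_pmf.prob (pair_pmf A B) {z. P (fst z) (snd z)} \<le> \<beta>"
proof -
  have "measure_pmf.prob (pair_pmf A B) {z. P (fst z) (snd z)} = ex (pair_pmf A B) (\<lambda>z. of_bool (P (fst z) (snd z)))"
    using fA fB by (intro prob_ex) simp
  also have "\<dots> = ex A (\<lambda>a. ex B (\<lambda>b. of_bool (P a b)))"
    by (simp add: ex_pair_gen)
  also have "\<dots> = ex A (\<lambda>a. measure_pmf.prob B {b. P a b})"
    using fB by (intro ex_cong) (simp add: prob_ex)
  also have "\<dots> \<le> ex A (\<lambda>_. \<beta>)"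
    using b by (intro ex_mono) auto
  also have "\<dots> = \<beta>" using fA by (rule ex_const)
  finally show ?thesis .
qed

lemma finite_set_random_subset: "finite (set_pmf (random_subset n p))"
  unfolding random_subset_def by (simp add: finite_set_Pi_bool)

context fixed_graph
begin

lemma prob_bad:
  assumes t: "t > 0" and err: "\<bar>MJA - (p * p * real (\<Sum>i<n. d i) - 2 * aa n d p 2)\<bar> \<le> err"
  shows "measure_pmf.prob (random_subset n p)
           {S. err + 4 * t < \<bar>MJA - real (seqMJ (induced_degseq E S))\<bar>}
         \<le> (2 * D * p * card E + p * (\<Sum>v<n. real ((1 + d v) * (1 + D)))) / t\<^sup>2"
proof -
  let ?A2 = "\<Sum>v<n. p * pmf (binomial_pmf (d v) p) 2"
  have A2: "?A2 = aa n d p 2" unfolding aa_def by (simp add: sum_distrib_left)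
  have hs: "real (\<Sum>i<n. d i) = 2 * real (card E)"
    using handshake_E[OF hE] by (metis of_nat_mult of_nat_numeral)
  let ?S = "\<lambda>f::nat\<Rightarrow>bool. {i\<in>{..<n}. f i}"
  let ?B1 = "{f. t < \<bar>(\<Sum>e\<in>E. Xe e f) - p\<^sup>2 * real (card E)\<bar>}"
  let ?B2 = "{f. t < \<bar>(\<Sum>v<n. Wv v f) - ?A2\<bar>}"
  have sub: "(?S -` {S. err + 4 * t < \<bar>MJA - real (seqMJ (induced_degseq E S))\<bar>}) \<subseteq> ?B1 \<union> ?B2"
  proof
    fix f assume f: "f \<in> ?S -` {S. err + 4 * t < \<bar>MJA - real (seqMJ (induced_degseq E S))\<bar>}"
    have MJ: "real (seqMJ (induced_degseq E (?S f))) = 2 * (\<Sum>e\<in>E. Xe e f) - 2 * (\<Sum>v<n. Wv v f)"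
      using seqMJ_induced_real[OF hE, of "?S f"] eS_eq[of f] n2_eq[of f] by auto
    show "f \<in> ?B1 \<union> ?B2"
    proof (rule ccontr)
      assume "f \<notin> ?B1 \<union> ?B2"
      then have b1: "\<bar>(\<Sum>e\<in>E. Xe e f) - p\<^sup>2 * real (card E)\<bar> \<le> t"
        and b2: "\<bar>(\<Sum>v<n. Wv v f) - ?A2\<bar> \<le> t" by auto
      have "\<bar>MJA - real (seqMJ (induced_degseq E (?S f)))\<bar> \<le> err + 4 * t"
        using b1 b2 err unfolding MJ A2 hs by (simp add: power2_eq_square abs_le_iff)
      then show False using f by auto
    qed
  qed
  have "measure_pmf.prob (random_subset n p) {S. err + 4 * t < \<bar>MJA - real (seqMJ (induced_degseq E S))\<bar>}
      = measure_pmf.prob QQ (?S -` {S. err + 4 * t < \<bar>MJA - real (seqMJ (induced_degseq E S))\<bar>})"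
    unfolding random_subset_def by (simp add: measure_map_pmf)
  also have "\<dots> \<le> measure_pmf.prob QQ (?B1 \<union> ?B2)"
    by (rule measure_pmf.finite_measure_mono[OF sub]) simp
  also have "\<dots> \<le> measure_pmf.prob QQ ?B1 + measure_pmf.prob QQ ?B2"
    by (rule measure_Un_le) simp_all
  also have "measure_pmf.prob QQ ?B1 \<le> (2 * D * p * card E) / t\<^sup>2"
    using cheb[OF finQ t, of "\<lambda>f. \<Sum>e\<in>E. Xe e f" "p\<^sup>2 * real (card E)"] var_e t
    by (meson divide_right_mono order_trans zero_le_power2)
  also have "measure_pmf.prob QQ ?B2 \<le> p * (\<Sum>v<n. real ((1 + d v) * (1 + D))) / t\<^sup>2"
    using cheb[OF finQ t, of "\<lambda>f. \<Sum>v<n. Wv v f" ?A2] var_n t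
    by (meson divide_right_mono order_trans zero_le_power2)
  finally show ?thesis by (simp add: add_divide_distrib)
qed

end


lemma per_n:
  fixes n :: nat and d :: "nat \<Rightarrow> nat" and p \<epsilon> :: real
  assumes n: "n \<ge> 1" and d1: "\<forall>i<n. 1 \<le> d i"
    and srt: "\<forall>i j. i \<le> j \<and> j < n \<longrightarrow> d i \<le> d j"
    and ne: "simple_graphs_deg n d \<noteq> {}"
    and p: "0 < p" "p < 1 - \<epsilon>" and eps: "0 < \<epsilon>"
  defines "MM \<equiv> real (\<Sum>i<n. d i)" and "DD \<equiv> real (d (n - 1))"
  shows "real (seqMJ (dA n d p)) \<le> real (seqM (dA n d p))"
    and "min (1/9) \<epsilon> * (p * p * MM) - 4 * DD\<^sup>2 \<le> real (seqMJ (dA n d p))"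
    and "\<bar>real (seqM (dA n d p)) - p * p * MM\<bar> \<le> 4 * DD\<^sup>2"
    and "1 \<le> DD" "real n \<le> MM"
    and "\<And>t. t > 0 \<Longrightarrow> 1 - 5 * DD * p * MM / t\<^sup>2 \<le>
           measure_pmf.prob (graph_subset_pmf n d p)
             {(E, S). \<bar>real (seqMJ (dA n d p)) - real (seqMJ (induced_degseq E S))\<bar> \<le> 4 * DD\<^sup>2 + 4 * t}"
proof -
  let ?m = "Max (insert 0 (d ` {..<n}))"
  have p01: "0 \<le> p" "p \<le> 1" using p eps by auto
  have dle: "d i \<le> d (n - 1)" if "i < n" for i using srt that by auto
  have m_le: "?m \<le> d (n - 1)"
    using dle by (subst Max_le_iff) (auto intro: finite_imageI)
  show DD1: "1 \<le> DD" unfolding DD_def using d1 n by auto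
  show "real n \<le> MM"
  proof -
    have "(\<Sum>i<n. 1) \<le> (\<Sum>i<n. d i)" using d1 by (intro sum_mono) auto
    then show ?thesis unfolding MM_def by (simp del: of_nat_sum add: of_nat_sum[symmetric])
  qed
  have err: "(real ?m + 1)\<^sup>2 \<le> 4 * DD\<^sup>2"
  proof -
    have "real ?m + 1 \<le> 2 * DD" using m_le DD1 unfolding DD_def by linarith
    then have "(real ?m + 1)\<^sup>2 \<le> (2 * DD)\<^sup>2" by (intro power_mono) auto
    then show ?thesis by (simp add: power2_eq_square)
  qed
  have MM: "(\<Sum>i<n. real (d i)) = MM" unfolding MM_def by simp
  show "real (seqMJ (dA n d p)) \<le> real (seqM (dA n d p))"
    unfolding seqMJ_dA seqM_dA of_nat_le_iff by (intro sum_mono) auto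
  have MJ: "real (seqMJ (dA n d p)) = (\<Sum>k<Suc ?m. (if k \<noteq> 2 then real k else 0) * real (nA n d p k))"
    unfolding seqMJ_dA of_nat_sum by (intro sum.cong refl) auto
  have MA: "real (seqM (dA n d p)) = (\<Sum>k<Suc ?m. real k * real (nA n d p k))"
    unfolding seqM_dA by (simp add: of_nat_sum mult.commute)
  have wa1: "\<bar>(\<Sum>k<Suc ?m. (if k \<noteq> 2 then real k else 0) * real (nA n d p k))
      - (\<Sum>k<Suc ?m. (if k \<noteq> 2 then real k else 0) * aa n d p k)\<bar> \<le> (real ?m + 1)\<^sup>2"
    by (rule weighted_approx[OF p01]) auto
  have wa2: "\<bar>(\<Sum>k<Suc ?m. real k * real (nA n d p k))
      - (\<Sum>k<Suc ?m. real k * aa n d p k)\<bar> \<le> (real ?m + 1)\<^sup>2"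
    by (rule weighted_approx[OF p01]) auto
  have apMJ: "\<bar>real (seqMJ (dA n d p)) - (p * p * MM - 2 * aa n d p 2)\<bar> \<le> 4 * DD\<^sup>2"
    using wa1 err unfolding MJ sum_kJ_aa[OF p01] MM by linarith
  have apM: "\<bar>real (seqM (dA n d p)) - p * p * MM\<bar> \<le> 4 * DD\<^sup>2"
    using wa2 err unfolding MA sum_k_aa[OF p01] MM by linarith
  then show "\<bar>real (seqM (dA n d p)) - p * p * MM\<bar> \<le> 4 * DD\<^sup>2" .
  have low: "min (1/9) \<epsilon> * (p * p * MM) \<le> p * p * MM - 2 * aa n d p 2"
    using MJ_main_lower[OF p eps, of n d] d1 MM by auto
  then show "min (1/9) \<epsilon> * (p * p * MM) - 4 * DD\<^sup>2 \<le> real (seqMJ (dA n d p))"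
    using apMJ by linarith
  fix t :: real assume t: "t > 0"
  let ?MJA = "real (seqMJ (dA n d p))"
  let ?bad = "\<lambda>E S. 4 * DD\<^sup>2 + 4 * t < \<bar>?MJA - real (seqMJ (induced_degseq E S))\<bar>"
  let ?G = "pmf_of_set (simple_graphs_deg n d)"
  have finG: "finite (simple_graphs_deg n d)"
  proof -
    have "simple_graphs_deg n d \<subseteq> Pow (Pow {..<n})"
      unfolding simple_graphs_deg_def by auto
    then show ?thesis by (rule finite_subset) auto
  qed
  have setG: "set_pmf ?G = simple_graphs_deg n d" using finG ne by simp
  have bad: "measure_pmf.prob (graph_subset_pmf n d p) {z. ?bad (fst z) (snd z)} \<le> 5 * DD * p * MM / t\<^sup>2"
    unfolding graph_subset_pmf_def
  proof (rule pair_bound)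
    show "finite (set_pmf ?G)" using setG finG by simp
    show "finite (set_pmf (random_subset n p))" by (rule finite_set_random_subset)
    fix E assume "E \<in> set_pmf ?G"
    then have hE: "E \<in> simple_graphs_deg n d" using setG by simp
    interpret fixed_graph n d E p "d (n - 1)"
      by unfold_locales (use hE p01 dle in auto)
    have "measure_pmf.prob (random_subset n p) {S. ?bad E S}
         \<le> (2 * d (n - 1) * p * card E + p * (\<Sum>v<n. real ((1 + d v) * (1 + d (n - 1))))) / t\<^sup>2"
      by (rule prob_bad[OF t apMJ[unfolded MM_def]])
    also have "\<dots> \<le> 5 * DD * p * MM / t\<^sup>2"
    proof (rule divide_right_mono)
      have cE: "2 * real (card E) = MM" unfolding MM_def using handshake_E[OF hE]
        by (metis of_nat_mult of_nat_numeral)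
      have "(\<Sum>v<n. real ((1 + d v) * (1 + d (n - 1)))) = (real n + MM) * (1 + DD)"
        unfolding MM_def DD_def by (simp add: sum_distrib_right sum_distrib_left sum.distrib algebra_simps)
      also have "\<dots> \<le> (2 * MM) * (2 * DD)"
        using \<open>real n \<le> MM\<close> DD1 by (intro mult_mono) auto
      finally have s: "(\<Sum>v<n. real ((1 + d v) * (1 + d (n - 1)))) \<le> 4 * MM * DD" by simp
      have "real (2 * d (n - 1)) * p * real (card E) = DD * p * MM"
        using cE unfolding DD_def by (simp add: algebra_simps)
      moreover have "p * (\<Sum>v<n. real ((1 + d v) * (1 + d (n - 1)))) \<le> p * (4 * MM * DD)"
        using s p01 by (intro mult_left_mono) auto
      moreover have "p * (4 * MM * DD) = 4 * (DD * p * MM)" by simp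
      ultimately show "real (2 * d (n - 1)) * p * real (card E) + p * (\<Sum>v<n. real ((1 + d v) * (1 + d (n - 1))))
            \<le> 5 * DD * p * MM"
        using \<open>p * (4 * MM * DD) = 4 * (DD * p * MM)\<close> by linarith
    qed simp
    finally show "measure_pmf.prob (random_subset n p) {S. ?bad E S} \<le> 5 * DD * p * MM / t\<^sup>2" .
  qed
  have seteq: "{(E, S). \<bar>?MJA - real (seqMJ (induced_degseq E S))\<bar> \<le> 4 * DD\<^sup>2 + 4 * t}
        = space (measure_pmf (graph_subset_pmf n d p)) - {z. ?bad (fst z) (snd z)}"
    by auto
  have "measure_pmf.prob (graph_subset_pmf n d p)
        {(E, S). \<bar>?MJA - real (seqMJ (induced_degseq E S))\<bar> \<le> 4 * DD\<^sup>2 + 4 * t}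
      = 1 - measure_pmf.prob (graph_subset_pmf n d p) {z. ?bad (fst z) (snd z)}"
    unfolding seteq by (rule measure_pmf.prob_compl) simp
  then show "1 - 5 * DD * p * MM / t\<^sup>2 \<le> measure_pmf.prob (graph_subset_pmf n d p)
        {(E, S). \<bar>?MJA - real (seqMJ (induced_degseq E S))\<bar> \<le> 4 * DD\<^sup>2 + 4 * t}"
    using bad by linarith
qed


theorem lemma7p1:
  fixes d :: "nat \<Rightarrow> nat \<Rightarrow> nat" and p \<delta> :: "nat \<Rightarrow> real" and \<epsilon> :: real
  defines "M \<equiv> \<lambda>n. real (\<Sum>i<n. d n i)"
  defines "\<Delta> \<equiv> \<lambda>n. real (d n (n - 1))"
  assumes eps: "\<epsilon> > 0"
  assumes degs: "eventually (\<lambda>n. n \<ge> 1 \<and> (\<forall>i<n. 1 \<le> d n i)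
                     \<and> (\<forall>i j. i \<le> j \<and> j < n \<longrightarrow> d n i \<le> d n j)
                     \<and> even (\<Sum>i<n. d n i)
                     \<and> simple_graphs_deg n (d n) \<noteq> {}) sequentially"
  assumes p_range: "eventually (\<lambda>n. 0 < p n \<and> p n < 1 - \<epsilon>) sequentially"
  assumes delta_pos: "eventually (\<lambda>n. \<delta> n > 0) sequentially"
  assumes delta_lim: "\<delta> \<longlonglongrightarrow> 0"
  assumes delta_inv: "(\<lambda>n. 1 / \<delta> n) \<in> O(\<lambda>n. ln (ln (M n)))"
  assumes cond: "eventually (\<lambda>n. (\<Delta> n)\<^sup>2 * (p n) powi (-12) * (ln (M n)) ^ 12
                        \<le> \<delta> n * p n * M n) sequentially"
  shows "(\<lambda>n. real (seqMJ (dA n (d n) (p n)))) \<in> \<Theta>(\<lambda>n. real (seqM (dA n (d n) (p n))))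
       \<and> (\<exists>g :: nat \<Rightarrow> real. g \<in> o(\<lambda>n. real (seqM (dA n (d n) (p n)))) \<and>
           (\<lambda>n. measure_pmf.prob (graph_subset_pmf n (d n) (p n))
                  {(E, S). \<bar>real (seqMJ (dA n (d n) (p n)))
                            - real (seqMJ (induced_degseq E S))\<bar> \<le> g n})
           \<longlonglongrightarrow> 1)"
proof -
  define c where "c = min (1/9) \<epsilon>"
  define c0 :: real where "c0 = (ln 2) ^ 12"
  have c_pos: "0 < c" "c \<le> 1/9" using eps unfolding c_def by auto
  have c0_pos: "0 < c0" unfolding c0_def by simp
  define r where "r n = \<delta> n / c0" for n
  have r_lim: "r \<longlonglongrightarrow> 0"
    unfolding r_def using tendsto_divide[OF delta_lim tendsto_const[of c0]] c0_pos by simp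
  have ev_small: "eventually (\<lambda>n. r n < c / 8) sequentially"
    using order_tendstoD(2)[OF r_lim, of "c / 8"] c_pos by simp
  define \<rho> where "\<rho> n = \<Delta> n / (p n ^ 3 * M n)" for n
  define t where "t n = sqrt (sqrt (\<rho> n)) * (p n)\<^sup>2 * M n" for n
  define g where "g n = 4 * (\<Delta> n)\<^sup>2 + 4 * t n" for n
  let ?MJa = "\<lambda>n. real (seqMJ (dA n (d n) (p n)))"
  let ?Ma = "\<lambda>n. real (seqM (dA n (d n) (p n)))"
  let ?P = "\<lambda>n. measure_pmf.prob (graph_subset_pmf n (d n) (p n))
                  {(E, S). \<bar>real (seqMJ (dA n (d n) (p n)))
                            - real (seqMJ (induced_degseq E S))\<bar> \<le> g n}"
  have ev: "eventually (\<lambda>n. c / 4 * ?Ma n \<le> ?MJa n \<and> ?MJa n \<le> ?Ma n \<and> 0 < ?Ma n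
      \<and> 0 \<le> g n / ?Ma n \<and> g n / ?Ma n \<le> 8 * r n + 8 * sqrt (sqrt (r n))
      \<and> 1 - 5 * sqrt (r n) \<le> ?P n \<and> ?P n \<le> 1) sequentially"
    using degs p_range delta_pos cond ev_small
  proof eventually_elim
    case (elim n)
    then have n1: "n \<ge> 1" and d1: "\<forall>i<n. 1 \<le> d n i"
      and srt: "\<forall>i j. i \<le> j \<and> j < n \<longrightarrow> d n i \<le> d n j"
      and ev2: "even (\<Sum>i<n. d n i)" and ne: "simple_graphs_deg n (d n) \<noteq> {}"
      and p: "0 < p n" "p n < 1 - \<epsilon>" and dp: "\<delta> n > 0"
      and cn: "(\<Delta> n)\<^sup>2 * (p n) powi (-12) * (ln (M n)) ^ 12 \<le> \<delta> n * p n * M n"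
      and rs: "r n < c / 8" by auto
    note PN = per_n[OF n1 d1 srt ne p eps]
    have Mn: "M n = real (\<Sum>i<n. d n i)" unfolding M_def by simp
    have Dn: "\<Delta> n = real (d n (n - 1))" unfolding \<Delta>_def by simp
    note PN' = PN[folded Mn Dn, folded c_def]
    have D1: "1 \<le> \<Delta> n" using PN'(4) .
    have nM: "real n \<le> M n" using PN'(5) .
    have M2: "2 \<le> M n"
    proof -
      have "1 \<le> (\<Sum>i<n. d n i)" using nM n1 unfolding Mn by linarith
      moreover have "\<forall>x::nat. 1 \<le> x \<longrightarrow> even x \<longrightarrow> 2 \<le> x" by presburger
      ultimately have "2 \<le> (\<Sum>i<n. d n i)" using ev2 by blast
      then show ?thesis unfolding Mn by linarith
    qed
    have Mpos: "0 < M n" using M2 by simp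
    have p1: "p n \<le> 1" using p eps by simp
    have L: "c0 \<le> (ln (M n)) ^ 12"
    proof -
      have "ln 2 \<le> ln (M n)" using M2 by simp
      then show ?thesis unfolding c0_def by (intro power_mono) auto
    qed
    have pw: "(p n) powi (-12) = 1 / p n ^ 12"
      by (simp add: power_int_minus field_simps)
    have "(\<Delta> n)\<^sup>2 * (ln (M n)) ^ 12 \<le> \<delta> n * p n ^ 13 * M n"
    proof -
      have "(\<Delta> n)\<^sup>2 * (ln (M n)) ^ 12 = ((\<Delta> n)\<^sup>2 * (p n) powi (-12) * (ln (M n)) ^ 12) * p n ^ 12"
        using p unfolding pw by (simp add: field_simps)
      also have "\<dots> \<le> (\<delta> n * p n * M n) * p n ^ 12"
        using cn p by (intro mult_right_mono) auto
      also have "\<dots> = \<delta> n * p n ^ 13 * M n"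
        by (simp add: algebra_simps power_Suc[symmetric] del: power_Suc)
      finally show ?thesis .
    qed
    moreover have "(\<Delta> n)\<^sup>2 * c0 \<le> (\<Delta> n)\<^sup>2 * (ln (M n)) ^ 12"
      using L by (intro mult_left_mono) auto
    ultimately have "(\<Delta> n)\<^sup>2 * c0 \<le> \<delta> n * p n ^ 13 * M n" by linarith
    then have key: "(\<Delta> n)\<^sup>2 \<le> r n * p n ^ 13 * M n"
      using c0_pos unfolding r_def by (simp add: field_simps)
    have r0: "0 \<le> r n" unfolding r_def using dp c0_pos by simp
    have p13a: "p n ^ 13 \<le> p n ^ 2" and p13b: "p n ^ 13 \<le> p n ^ 3"
      using p p1 by (auto intro!: power_decreasing)
    have A: "(\<Delta> n)\<^sup>2 \<le> r n * (p n ^ 2 * M n)"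
    proof -
      have "r n * p n ^ 13 * M n \<le> r n * p n ^ 2 * M n"
        using p13a r0 Mpos by (intro mult_right_mono mult_left_mono) auto
      then show ?thesis using key by (simp add: algebra_simps)
    qed
    have B: "\<Delta> n \<le> r n * (p n ^ 3 * M n)"
    proof -
      have "\<Delta> n \<le> (\<Delta> n)\<^sup>2" using D1 by (simp add: power2_eq_square)
      moreover have "r n * p n ^ 13 * M n \<le> r n * p n ^ 3 * M n"
        using p13b r0 Mpos by (intro mult_right_mono mult_left_mono) auto
      ultimately show ?thesis using key by (simp add: algebra_simps)
    qed
    have pM: "0 < p n ^ 2 * M n" "0 < p n ^ 3 * M n" using p Mpos by auto
    have rho_le: "\<rho> n \<le> r n" unfolding \<rho>_def using B pM by (simp add: divide_le_eq)
    have rho_pos: "0 < \<rho> n" unfolding \<rho>_def using D1 pM by simp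
    have e4: "4 * (\<Delta> n)\<^sup>2 \<le> c / 2 * (p n ^ 2 * M n)"
    proof -
      have "4 * (\<Delta> n)\<^sup>2 \<le> 4 * (r n * (p n ^ 2 * M n))" using A by simp
      also have "\<dots> \<le> 4 * (c / 8 * (p n ^ 2 * M n))"
        using rs pM by (intro mult_left_mono mult_right_mono) auto
      finally show ?thesis by (simp add: mult.commute)
    qed
    have pp: "p n * p n * M n = p n ^ 2 * M n" by (simp add: power2_eq_square)
    have MJlow: "c / 2 * (p n ^ 2 * M n) \<le> ?MJa n"
      using PN'(2) e4 unfolding pp by (simp add: algebra_simps)
    have cX: "c / 2 * (p n ^ 2 * M n) \<le> 1 / 2 * (p n ^ 2 * M n)"
      using c_pos pM by (intro mult_right_mono) auto
    have ab: "?Ma n \<le> p n ^ 2 * M n + 4 * (\<Delta> n)\<^sup>2" "p n ^ 2 * M n \<le> ?Ma n + 4 * (\<Delta> n)\<^sup>2"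
      using PN'(3) unfolding pp abs_le_iff by linarith+
    have Mup: "?Ma n \<le> 2 * (p n ^ 2 * M n)"
      using ab e4 cX pM by linarith
    have Mlow: "(p n ^ 2 * M n) / 2 \<le> ?Ma n"
      using ab e4 cX pM by linarith
    have Mapos: "0 < ?Ma n" using Mlow pM by linarith
    have "c / 4 * ?Ma n \<le> c / 4 * (2 * (p n ^ 2 * M n))"
      using Mup c_pos by (intro mult_left_mono) auto
    moreover have "c / 4 * (2 * (p n ^ 2 * M n)) = c / 2 * (p n ^ 2 * M n)" by simp
    ultimately have th1: "c / 4 * ?Ma n \<le> ?MJa n"
      using MJlow by linarith
    have s_le: "sqrt (sqrt (\<rho> n)) \<le> sqrt (sqrt (r n))"
      using rho_le by simp
    have g_le: "g n \<le> (8 * r n + 8 * sqrt (sqrt (r n))) * ?Ma n"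
    proof -
      have "g n \<le> 4 * (r n * (p n ^ 2 * M n)) + 4 * (sqrt (sqrt (r n)) * (p n ^ 2 * M n))"
      proof -
        have "t n = sqrt (sqrt (\<rho> n)) * (p n ^ 2 * M n)" unfolding t_def by (simp add: mult.assoc)
        also have "\<dots> \<le> sqrt (sqrt (r n)) * (p n ^ 2 * M n)"
          using s_le pM by (intro mult_right_mono) auto
        finally show ?thesis unfolding g_def using A by linarith
      qed
      also have "\<dots> = (8 * r n + 8 * sqrt (sqrt (r n))) * ((p n ^ 2 * M n) / 2)"
        by (simp add: algebra_simps)
      also have "\<dots> \<le> (8 * r n + 8 * sqrt (sqrt (r n))) * ?Ma n"
        using Mlow r0 by (intro mult_left_mono) auto
      finally show ?thesis .
    qed
    have tpos: "0 < t n" unfolding t_def using rho_pos p Mpos by simp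
    have g0: "0 \<le> g n" unfolding g_def using tpos
      by (intro add_nonneg_nonneg) auto
    have prob: "1 - 5 * \<Delta> n * p n * M n / (t n)\<^sup>2 \<le> ?P n"
      using PN'(6)[OF tpos] unfolding g_def Dn by simp
    have ratio: "5 * \<Delta> n * p n * M n / (t n)\<^sup>2 = 5 * sqrt (\<rho> n)"
    proof -
      define s where "s = sqrt (\<rho> n)"
      have s0: "0 < s" unfolding s_def using rho_pos by simp
      have rs2: "\<rho> n = s * s" unfolding s_def using rho_pos by simp
      have tt: "(t n)\<^sup>2 = s * (p n ^ 2 * M n)\<^sup>2"
        unfolding t_def s_def using rho_pos by (simp add: power2_eq_square algebra_simps)
      have Dr: "\<Delta> n = \<rho> n * (p n ^ 3 * M n)" unfolding \<rho>_def using p Mpos by simp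
      have "5 * \<Delta> n * p n * M n = 5 * s * s * (p n ^ 2 * M n)\<^sup>2"
        unfolding Dr rs2 by (simp add: power2_eq_square power3_eq_cube algebra_simps)
      moreover have X: "0 < (p n ^ 2 * M n)\<^sup>2" using p Mpos by simp
      ultimately have "5 * \<Delta> n * p n * M n / (t n)\<^sup>2 = (5 * s) * (s * (p n ^ 2 * M n)\<^sup>2) / (s * (p n ^ 2 * M n)\<^sup>2)"
        unfolding tt by (simp add: mult.assoc)
      also have "\<dots> = 5 * s" using s0 X by simp
      finally show ?thesis unfolding s_def .
    qed
    have "1 - 5 * sqrt (r n) \<le> ?P n"
    proof -
      have "sqrt (\<rho> n) \<le> sqrt (r n)" using rho_le by simp
      then show ?thesis using prob unfolding ratio by linarith
    qed
    moreover have "?P n \<le> 1" by simp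
    moreover have "g n / ?Ma n \<le> 8 * r n + 8 * sqrt (sqrt (r n))"
      using g_le Mapos by (simp add: divide_le_eq)
    moreover have "?MJa n \<le> ?Ma n" using PN'(1) .
    ultimately show ?case using th1 Mapos g0 by simp
  qed
  have "eventually (\<lambda>n. c / 4 * norm (?Ma n) \<le> norm (?MJa n) \<and> norm (?MJa n) \<le> 1 * norm (?Ma n)) sequentially"
    using ev by eventually_elim auto
  then have part1: "?MJa \<in> \<Theta>(?Ma)"
    by (intro bigthetaI'[of "c / 4" 1]) (use c_pos in auto)
  have up0: "(\<lambda>n. 8 * r n + 8 * sqrt (sqrt (r n))) \<longlonglongrightarrow> 0"
    using tendsto_add[OF tendsto_mult_left[OF r_lim, of 8]
        tendsto_mult_left[OF tendsto_real_sqrt[OF tendsto_real_sqrt[OF r_lim]], of 8]] by simp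
  have ev1: "eventually (\<lambda>n. 0 \<le> g n / ?Ma n) sequentially" using ev by eventually_elim auto
  have ev2: "eventually (\<lambda>n. g n / ?Ma n \<le> 8 * r n + 8 * sqrt (sqrt (r n))) sequentially"
    using ev by eventually_elim auto
  have ev3: "eventually (\<lambda>n. ?Ma n \<noteq> 0) sequentially" using ev by eventually_elim auto
  have ev4: "eventually (\<lambda>n. 1 - 5 * sqrt (r n) \<le> ?P n) sequentially" using ev by eventually_elim auto
  have ev5: "eventually (\<lambda>n. ?P n \<le> 1) sequentially" using ev by eventually_elim auto
  have "(\<lambda>n. g n / ?Ma n) \<longlonglongrightarrow> 0"
    by (rule tendsto_sandwich[OF ev1 ev2 tendsto_const up0])
  then have part2: "g \<in> o(?Ma)"
    by (rule smalloI_tendsto[OF _ ev3])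
  have low1: "(\<lambda>n. 1 - 5 * sqrt (r n)) \<longlonglongrightarrow> 1"
    using tendsto_diff[OF tendsto_const[of 1] tendsto_mult_left[OF tendsto_real_sqrt[OF r_lim], of 5]] by simp
  have part3: "?P \<longlonglongrightarrow> 1"
    by (rule tendsto_sandwich[OF ev4 ev5 low1 tendsto_const])
  show ?thesis using part1 part2 part3 by blast
qed


end
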